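(* Let $q>1$, let $\chi_q$ be a real Dirichlet character modulo $q$, and let $\tilde\chi_q$ be any modified character associated with $\chi_q$. Then for every integer $k\ge1$ there exists $n\in\mathbb{N}\cup\{0\}$ such that $$\sum_{m=1}^{k}\tilde\chi_q(n+m)\ \ge 0,$$ equivalently $\#\{1\le m\le k:\tilde\chi_q(n+m)=-1\}\le k/2$. In particular $\delta(k)\le k/2$ for all $k\ge1$.
   Context: For an integer $q>1$ and a real-valued (i.e. $\{0,\pm1\}$-valued) Dirichlet character $\chi_q$ modulo $q$ (principal or not), a modified character $\tilde\chi_q$ is the completely multiplicative function $\mathbb{N}\to\{+1,-1\}$ defined on primes by $\tilde\chi_q(p)=\chi_q(p)$ if $p\nmid q$, and $\tilde\chi_q(p)=\eta(p)$ if $p\mid q$, where $\eta(p)\in\{+1,-1\}$ is an arbitrary choice of sign for each prime $p\mid q$. Here $\delta(k)$ denotes the supremum, over all $q>1$, all real characters $\chi_q$ mod $q$ and all sign choices $\eta$, of $\min_{n\ge0}\#\{1\le m\le k:\tilde\chi_q(n+m)=-1\}$. *)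

theory Defs
  imports "HOL-Computational_Algebra.Primes"
begin

definition real_dirichlet_char :: "nat \<Rightarrow> (nat \<Rightarrow> int) \<Rightarrow> bool" where
  "real_dirichlet_char q \<chi> \<longleftrightarrow>
     (\<forall>n. \<chi> (n + q) = \<chi> n) \<and>
     (\<forall>m n. \<chi> (m * n) = \<chi> m * \<chi> n) \<and>
     (\<forall>n. coprime n q \<longrightarrow> \<chi> n \<in> {1, -1}) \<and>
     (\<forall>n. \<not> coprime n q \<longrightarrow> \<chi> n = 0)"

definition modified_char :: "nat \<Rightarrow> (nat \<Rightarrow> int) \<Rightarrow> (nat \<Rightarrow> int) \<Rightarrow> bool" where
  "modified_char q \<chi> f \<longleftrightarrow>
     f 1 = 1 \<and>
     (\<forall>m n. 0 < m \<longrightarrow> 0 < n \<longrightarrow> f (m * n) = f m * f n) \<and>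
     (\<forall>p. prime p \<longrightarrow> \<not> p dvd q \<longrightarrow> f p = \<chi> p) \<and>
     (\<forall>p. prime p \<longrightarrow> p dvd q \<longrightarrow> f p \<in> {1, -1})"

definition neg_count :: "(nat \<Rightarrow> int) \<Rightarrow> nat \<Rightarrow> nat \<Rightarrow> nat" where
  "neg_count f k n = card {m \<in> {1..k}. f (n + m) = -1}"

definition delta :: "nat \<Rightarrow> nat" where
  "delta k = Sup {c. \<exists>q \<chi> f. 1 < q \<and> real_dirichlet_char q \<chi> \<and> modified_char q \<chi> f \<and>
                       c = (LEAST c'. \<exists>n. neg_count f k n = c')}"

end

theory Submission imports Defs Complex_Main
begin

lemma pm_lemma:
  assumes f1: "f 1 = (1::int)"
    and mult: "\<And>m n. 0 < m \<Longrightarrow> 0 < n \<Longrightarrow> f (m * n) = f m * f n"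
    and fp: "\<And>p. prime (p::nat) \<Longrightarrow> f p \<in> {1, -1}"
  shows "0 < n \<Longrightarrow> f n \<in> {1,-1}"
proof (induction n rule: less_induct)
  case (less n)
  show ?case
  proof (cases "n = 1")
    case True then show ?thesis using f1 by simp
  next
    case False
    then obtain p where p: "prime p" "p dvd n" using prime_factor_nat[of n] by auto
    then obtain m where nm: "n = p * m" by blast
    have "0 < m" using nm less.prems by (cases m) auto
    have "m < n" using nm prime_gt_1_nat[OF p(1)] \<open>0<m\<close> by simp
    have "f n = f p * f m" using nm mult prime_gt_0_nat[OF p(1)] \<open>0<m\<close> by simp
    with fp[OF p(1)] less.IH[OF \<open>m<n\<close> \<open>0<m\<close>] show ?thesis by auto
  qed
qed

lemma f_pow:
  assumes mult: "\<And>m n. 0 < m \<Longrightarrow> 0 < n \<Longrightarrow> f (m * n) = (f m * f n :: int)"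
    and p: "0 < (p::nat)" and e: "0 < (e::nat)"
  shows "f (p ^ i * e) = f p ^ i * f e"
proof (induction i)
  case 0 then show ?case by simp
next
  case (Suc i)
  have "p ^ Suc i * e = p * (p ^ i * e)" by simp
  then have "f (p ^ Suc i * e) = f p * f (p ^ i * e)" using mult p e by simp
  then show ?case using Suc by simp
qed

lemma divisors_decomp:
  fixes p u :: nat assumes p: "prime p" and pu: "\<not> p dvd u"
  shows "{d. d dvd p^k * u} = (\<lambda>(i,e). p^i * e) ` ({..k} \<times> {e. e dvd u})"
proof
  show "{d. d dvd p^k * u} \<subseteq> (\<lambda>(i,e). p^i * e) ` ({..k} \<times> {e. e dvd u})"
  proof
    fix d assume "d \<in> {d. d dvd p^k * u}"
    then have "d dvd p^k * u" by simp
    then obtain x y where "d = x * y" "x dvd p^k" "y dvd u" by (erule dvd_productE)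
    moreover then obtain i where "i \<le> k" "x = p ^ i" using divides_primepow_nat[OF p] by blast
    ultimately show "d \<in> (\<lambda>(i,e). p^i * e) ` ({..k} \<times> {e. e dvd u})" by force
  qed
next
  show "(\<lambda>(i,e). p^i * e) ` ({..k} \<times> {e. e dvd u}) \<subseteq> {d. d dvd p^k * u}"
    by (auto intro: mult_dvd_mono le_imp_power_dvd)
qed

lemma inj_decomp:
  fixes p u :: nat assumes p: "prime p" and pu: "\<not> p dvd u" and u: "u > 0"
  shows "inj_on (\<lambda>(i,e). p^i * e) ({..k} \<times> {e. e dvd u})"
proof -
  have key: "i = j \<and> e = e'" if "i \<le> j" "p^i * e = p^j * e'" "e dvd u" "e' dvd u" for i j e e'
  proof -
    have p0: "p > 0" using p prime_gt_0_nat by simp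
    then have pp: "p ^ i > 0" by simp
    have "p^j = p^i * p^(j-i)" using \<open>i \<le> j\<close> by (simp add: power_add[symmetric])
    then have "p^i * e = p^i * (p^(j-i) * e')" using that(2) by (simp add: mult.assoc)
    then have "e = p^(j-i) * e'" using pp p0 by simp
    moreover have "\<not> p dvd e" using that(3) pu dvd_trans by blast
    ultimately have "j - i = 0"
      by (metis dvd_mult2 dvd_refl gr0I power_eq_if)
    then show ?thesis using \<open>e = p^(j-i) * e'\<close> \<open>i \<le> j\<close> by simp
  qed
  show ?thesis
    unfolding inj_on_def
  proof (clarsimp)
    fix i e j e'
    assume "i \<le> k" "e dvd u" "j \<le> k" "e' dvd u" "p ^ i * e = p ^ j * e'"
    then show "i = j \<and> e = e'"
      using key[of i j e e'] key[of j i e' e] by (cases "i \<le> j") auto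
  qed
qed

lemma geom_pm:
  assumes "c \<in> {1, -1::int}"
  shows "(\<Sum>i\<le>k. c ^ i) \<ge> 0"
proof (cases "c = 1")
  case True then show ?thesis by simp
next
  case False
  then have c: "c = -1" using assms by auto
  have "(\<Sum>i\<le>k. (-1::int) ^ i) = (if even k then 1 else 0)"
    by (induction k) auto
  then show ?thesis using c by simp
qed

lemma divsum_nonneg:
  assumes f1: "f 1 = (1::int)"
    and mult: "\<And>m n. 0 < m \<Longrightarrow> 0 < n \<Longrightarrow> f (m * n) = f m * f n"
    and fp: "\<And>p. prime (p::nat) \<Longrightarrow> f p \<in> {1, -1}"
  shows "0 < n \<Longrightarrow> (\<Sum>d\<in>{d. d dvd n}. f d) \<ge> 0"
proof (induction n rule: less_induct)
  case (less n)
  show ?case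
  proof (cases "n = 1")
    case True then show ?thesis using f1 by simp
  next
    case False
    then obtain p where p: "prime p" "p dvd n" using prime_factor_nat[of n] by auto
    have nz: "n \<noteq> 0" using less.prems by simp
    have nunit: "\<not> is_unit p" using prime_gt_1_nat[OF p(1)] by simp
    obtain u where nu: "n = p ^ multiplicity p n * u" "\<not> p dvd u"
      by (rule multiplicity_decompose'[of n p]) (use nz nunit in simp_all)
    define k where "k = multiplicity p n"
    have "k \<ge> 1" unfolding k_def using p nz nunit
      by (simp add: multiplicity_gt_zero_iff Suc_le_eq)
    have n_eq: "n = p ^ k * u" unfolding k_def by (rule nu(1))
    have u0: "0 < u" using nz n_eq by (metis mult_0_right neq0_conv)
    have pos: "p > 0" using p prime_gt_0_nat by auto
    have "p ^ k > 1" using prime_gt_1_nat[OF p(1)] \<open>k \<ge> 1\<close> by (intro one_less_power) auto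
    then have "u < n" using u0 n_eq by simp
    have "(\<Sum>d\<in>{d. d dvd n}. f d) = (\<Sum>x\<in>{..k} \<times> {e. e dvd u}. f ((\<lambda>(i,e). p^i * e) x))"
      unfolding n_eq divisors_decomp[OF p(1) nu(2)]
      by (subst sum.reindex[OF inj_decomp[OF p(1) nu(2) u0]]) (simp add: comp_def)
    also have "\<dots> = (\<Sum>i\<le>k. \<Sum>e\<in>{e. e dvd u}. f (p^i * e))"
      by (subst sum.cartesian_product) (rule sum.cong, auto)
    also have "\<dots> = (\<Sum>i\<le>k. \<Sum>e\<in>{e. e dvd u}. f p ^ i * f e)"
    proof (intro sum.cong refl)
      fix i e assume "e \<in> {e. e dvd u}"
      then have "e > 0" using u0 by (auto intro: Nat.gr0I)
      then show "f (p^i * e) = f p ^ i * f e" using f_pow[OF mult pos] by blast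
    qed
    also have "\<dots> = (\<Sum>i\<le>k. f p ^ i) * (\<Sum>e\<in>{e. e dvd u}. f e)"
      by (simp add: sum_product)
    also have "\<dots> \<ge> 0"
      using geom_pm[OF fp[OF p(1)]] less.IH[OF \<open>u < n\<close> u0] by simp
    finally show ?thesis .
  qed
qed



definition harm :: "nat \<Rightarrow> real" where "harm n = (\<Sum>k=1..n. inverse (of_nat k))"

lemma ln_le_harm: "ln (real n + 1) \<le> harm n"
proof (induction n)
  case 0 then show ?case by (simp add: harm_def)
next
  case (Suc n)
  have eq: "real (Suc n) + 1 = (real n + 1) * (1 + 1 / (real n + 1))"
    by (simp add: field_simps)
  have "ln (real (Suc n) + 1) = ln (real n + 1) + ln (1 + 1 / (real n + 1))"
    unfolding eq by (rule ln_mult_pos) (auto simp: add_pos_pos)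
  also have "ln (1 + 1 / (real n + 1)) \<le> 1 / (real n + 1)"
    by (rule ln_add_one_self_le_self) simp
  finally have "ln (real (Suc n) + 1) \<le> harm n + 1 / (real n + 1)" using Suc by simp
  then show ?case by (simp add: harm_def divide_inverse add.commute)
qed

definition PS :: "(nat \<Rightarrow> int) \<Rightarrow> nat \<Rightarrow> int" where "PS f N = (\<Sum>x=1..N. f x)"

lemma PS_Suc: "PS f (Suc N) = PS f N + f (Suc N)" unfolding PS_def by simp

lemma PS_0: "PS f 0 = 0" unfolding PS_def by simp

lemma div_Suc_dvd: "0 < (m::nat) \<Longrightarrow> Suc N div m = N div m + (if m dvd Suc N then 1 else 0)"
  by (auto simp: div_Suc dvd_eq_mod_eq_0 mod_Suc)

definition TT where "TT f N = (\<Sum>m=1..N. PS f (N div m))"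

lemma TT_Suc: "TT f (Suc N) = TT f N + (\<Sum>d\<in>{d. d dvd Suc N}. f d)"
proof -
  have "TT f (Suc N) = (\<Sum>m=1..Suc N. PS f (N div m) + (if m dvd Suc N then f (Suc N div m) else 0))"
    unfolding TT_def
  proof (rule sum.cong[OF refl])
    fix m assume "m \<in> {1..Suc N}"
    then have "0 < m" by simp
    then show "PS f (Suc N div m) = PS f (N div m) + (if m dvd Suc N then f (Suc N div m) else 0)"
      using div_Suc_dvd[of m N] by (auto simp: PS_Suc)
  qed
  also have "\<dots> = (\<Sum>m=1..Suc N. PS f (N div m)) + (\<Sum>m=1..Suc N. if m dvd Suc N then f (Suc N div m) else 0)"
    by (simp add: sum.distrib)
  also have "(\<Sum>m=1..Suc N. PS f (N div m)) = TT f N" unfolding TT_def by (simp add: PS_0)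
  also have "(\<Sum>m=1..Suc N. if m dvd Suc N then f (Suc N div m) else 0) = (\<Sum>m\<in>{m\<in>{1..Suc N}. m dvd Suc N}. f (Suc N div m))"
    by (rule sum.inter_filter[symmetric]) simp
  also have "{m\<in>{1..Suc N}. m dvd Suc N} = {d. d dvd Suc N}"
    by (auto simp: dvd_imp_le Suc_le_eq intro: Nat.gr0I)
  also have "(\<Sum>m\<in>{d. d dvd Suc N}. f (Suc N div m)) = (\<Sum>d\<in>{d. d dvd Suc N}. f d)"
    by (rule sum.reindex_bij_witness[where i="\<lambda>d. Suc N div d" and j="\<lambda>d. Suc N div d"])
       (auto simp: div_div_eq_right dvd_div_eq_mult elim!: dvdE)
  finally show ?thesis by simp
qed

lemma TT_nonneg:
  assumes f1: "f 1 = (1::int)"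
    and mult: "\<And>m n. 0 < m \<Longrightarrow> 0 < n \<Longrightarrow> f (m * n) = f m * f n"
    and fp: "\<And>p. prime (p::nat) \<Longrightarrow> f p \<in> {1, -1}"
  shows "TT f N \<ge> 0"
proof (induction N)
  case 0 then show ?case by (simp add: TT_def)
next
  case (Suc N)
  then show ?case using TT_Suc[of f N] divsum_nonneg[OF f1 mult fp, of "Suc N"] by simp
qed

lemma div_lower: "0 < (m::nat) \<Longrightarrow> real N / real m - 1 \<le> real (N div m)"
proof -
  assume m: "0 < m"
  have e: "real N = real m * real (N div m) + real (N mod m)"
    by (metis div_mult_mod_eq mult.commute of_nat_add of_nat_mult)
  have "real (N mod m) < real m" using m by simp
  then have "real N < real m * (real (N div m) + 1)" using e by (simp add: algebra_simps)
  then have "real N / real m < real (N div m) + 1" using m by (simp add: pos_divide_less_eq mult.commute)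
  then show ?thesis by simp
qed

lemma window_exists:
  assumes f1: "f 1 = (1::int)"
    and mult: "\<And>m n. 0 < m \<Longrightarrow> 0 < n \<Longrightarrow> f (m * n) = f m * f n"
    and fp: "\<And>p. prime (p::nat) \<Longrightarrow> f p \<in> {1, -1}"
    and k: "1 \<le> k"
  shows "\<exists>n. (\<Sum>m=1..k. f (n+m)) \<ge> 0"
proof (rule ccontr)
  assume neg: "\<not> ?thesis"
  have H: "(\<Sum>m=1..k. f (n+m)) \<le> -1" for n 
  proof - from neg have "\<not> 0 \<le> (\<Sum>m=1..k. f (n+m))" by blast then show ?thesis by linarith qed
  have shift: "PS f (n + j) = PS f n + (\<Sum>m=1..j. f (n+m))" for n j
    by (induction j) (simp_all add: PS_def)
  have le1: "f x \<le> 1" if "x > 0" for x using pm_lemma[OF f1 mult fp that] by auto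
  have Pr: "PS f r \<le> int r" for r
  proof -
    have "PS f r \<le> (\<Sum>x=1..r. 1)" unfolding PS_def by (rule sum_mono) (simp add: le1)
    then show ?thesis by simp
  qed
  have Pa: "PS f (a*k + r) \<le> int r - int a" for a r
  proof (induction a)
    case 0 then show ?case using Pr by simp
  next
    case (Suc a)
    have "Suc a * k + r = (a*k + r) + k" by simp
    then have "PS f (Suc a * k + r) = PS f (a*k + r) + (\<Sum>m=1..k. f ((a*k+r)+m))"
      using shift by metis
    then show ?case using Suc H[of "a*k+r"] by simp
  qed
  define C where "C = int k * int k + int k"
  have PN: "int k * PS f N \<le> C - int N" for N
  proof -
    have "N = (N div k)*k + N mod k" by simp
    then have "PS f N \<le> int (N mod k) - int (N div k)" using Pa by metis
    then have a: "int k * PS f N \<le> int k * int (N mod k) - int k * int (N div k)"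
      by (metis mult_left_mono of_nat_0_le_iff right_diff_distrib)
    have lt: "N mod k < k" using k by simp
    then have b: "int k * int (N mod k) \<le> int k * int k" by (intro mult_left_mono) auto
    have c: "int k * int (N div k) = int N - int (N mod k)"
      by (metis add_diff_cancel_right' div_mult_mod_eq mult.commute of_nat_add of_nat_mult)
    show ?thesis using a b c lt unfolding C_def by linarith
  qed
  have sumbound: "(\<Sum>m=1..N. int (N div m)) \<le> int N * C" for N
  proof -
    have "0 \<le> int k * TT f N" using TT_nonneg[OF f1 mult fp] by simp
    also have "int k * TT f N = (\<Sum>m=1..N. int k * PS f (N div m))"
      unfolding TT_def by (simp add: sum_distrib_left)
    also have "\<dots> \<le> (\<Sum>m=1..N. C - int (N div m))" by (rule sum_mono) (rule PN)
    also have "\<dots> = int N * C - (\<Sum>m=1..N. int (N div m))" by (simp add: sum_subtractf)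
    finally show ?thesis by simp
  qed
  have hb: "harm N \<le> real_of_int C + 1" if "N > 0" for N
  proof -
    have "(\<Sum>m=1..N. real N / real m - 1) \<le> (\<Sum>m=1..N. real (N div m))"
      by (rule sum_mono) (simp add: div_lower)
    also have "\<dots> = real_of_int (\<Sum>m=1..N. int (N div m))" by simp
    also have "\<dots> \<le> real N * real_of_int C" using sumbound[of N]
      by (metis of_int_le_iff of_int_mult of_int_of_nat_eq)
    finally have "(\<Sum>m=1..N. real N / real m - 1) \<le> real N * real_of_int C" .
    moreover have "(\<Sum>m=1..N. real N / real m - 1) = real N * harm N - real N"
      by (simp add: harm_def sum_subtractf sum_distrib_left divide_inverse)
    ultimately have "real N * harm N \<le> real N * (real_of_int C + 1)" by (simp add: algebra_simps)
    then show ?thesis using that by simp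
  qed
  define N where "N = nat \<lceil>exp (real_of_int C + 2)\<rceil>"
  have eN: "exp (real_of_int C + 2) \<le> real N" unfolding N_def by linarith
  then have "N > 0" by (metis exp_gt_zero of_nat_0_less_iff order_less_le_trans)
  have "real_of_int C + 2 = ln (exp (real_of_int C + 2))" by simp
  also have "\<dots> \<le> ln (real N + 1)" using eN by (subst ln_le_cancel_iff) auto
  also have "\<dots> \<le> harm N" by (rule ln_le_harm)
  also have "\<dots> \<le> real_of_int C + 1" using hb \<open>N > 0\<close> by blast
  finally show False by simp
qed


lemma fp_from:
  assumes "real_dirichlet_char q \<chi>" "modified_char q \<chi> f" "prime (p::nat)"
  shows "f p \<in> {1,-1}"
proof (cases "p dvd q")
  case True then show ?thesis using assms unfolding modified_char_def by blast
next
  case False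
  then have "coprime p q" using assms(3) by (simp add: prime_imp_coprime)
  then have "\<chi> p \<in> {1,-1}" using assms(1) unfolding real_dirichlet_char_def by blast
  moreover have "f p = \<chi> p" using assms False unfolding modified_char_def by blast
  ultimately show ?thesis by simp
qed

lemma core:
  assumes rc: "real_dirichlet_char q \<chi>" and mc: "modified_char q \<chi> f" and k: "1 \<le> k"
  shows "\<exists>n. (\<Sum>m=1..k. f (n + m)) \<ge> 0 \<and> 2 * neg_count f k n \<le> k"
proof -
  have f1: "f 1 = 1" and mult: "\<And>m n. 0 < m \<Longrightarrow> 0 < n \<Longrightarrow> f (m * n) = f m * f n"
    using mc unfolding modified_char_def by blast+
  have fp: "\<And>p. prime (p::nat) \<Longrightarrow> f p \<in> {1, -1}" using fp_from[OF rc mc] by blast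
  obtain n where n: "(\<Sum>m=1..k. f (n + m)) \<ge> 0" using window_exists[OF f1 mult fp k] by blast
  have "(\<Sum>m=1..k. f (n + m)) = (\<Sum>m=1..k. 1 - 2 * (if f (n+m) = -1 then 1 else 0))"
  proof (rule sum.cong[OF refl])
    fix m assume "m \<in> {1..k}"
    then have "f (n+m) \<in> {1,-1}" using pm_lemma[OF f1 mult fp, of "n+m"] by simp
    then show "f (n + m) = 1 - 2 * (if f (n+m) = -1 then 1 else 0)" by auto
  qed
  also have "\<dots> = int k - 2 * (\<Sum>m=1..k. (if f (n+m) = -1 then 1 else 0))"
    by (simp add: sum_subtractf sum_distrib_left)
  also have "(\<Sum>m=1..k. (if f (n+m) = -1 then 1 else 0)) = (\<Sum>m\<in>{m\<in>{1..k}. f (n+m) = -1}. (1::int))"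
    by (rule sum.inter_filter[symmetric]) simp
  also have "\<dots> = int (neg_count f k n)" unfolding neg_count_def by simp
  finally have "2 * int (neg_count f k n) \<le> int k" using n by linarith
  then show ?thesis using n by auto
qed

theorem mainTheorem2:
  fixes q k :: nat and \<chi> f :: "nat \<Rightarrow> int"
  assumes "1 < q" and "real_dirichlet_char q \<chi>" and "modified_char q \<chi> f" and "1 \<le> k"
  shows "(\<exists>n::nat. (\<Sum>m=1..k. f (n + m)) \<ge> 0)
         \<and> (\<exists>n::nat. 2 * neg_count f k n \<le> k)
         \<and> 2 * delta k \<le> k"
proof -
  obtain n where n: "(\<Sum>m=1..k. f (n + m)) \<ge> 0" "2 * neg_count f k n \<le> k"
    using core[OF assms(2,3,4)] by blast
  define S where "S = {c. \<exists>q \<chi> f. 1 < q \<and> real_dirichlet_char q \<chi> \<and> modified_char q \<chi> f \<and>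
                       c = (LEAST c'. \<exists>n. neg_count f k n = c')}"
  have bound: "c \<le> k div 2" if cS: "c \<in> S" for c
  proof -
    obtain q' \<chi>' f' where h: "real_dirichlet_char q' \<chi>'" "modified_char q' \<chi>' f'"
      "c = (LEAST c'. \<exists>n. neg_count f' k n = c')" using cS unfolding S_def by blast
    obtain n' where n': "2 * neg_count f' k n' \<le> k" using core[OF h(1,2) assms(4)] by blast
    have "c \<le> neg_count f' k n'" unfolding h(3) by (rule Least_le) blast
    then show ?thesis using n' by linarith
  qed
  have "(LEAST c'. \<exists>n. neg_count f k n = c') \<in> S" unfolding S_def using assms by blast
  then have "S \<noteq> {}" by blast
  then have "Sup S \<le> k div 2" using bound by (intro cSup_least) auto
  then have "2 * delta k \<le> k" unfolding delta_def S_def[symmetric] by linarith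
  then show ?thesis using n by blast
qed

end
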